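(* Let $i\in\{0,\dots,t-1\}$. There exists a subset $\mathcal X^*\subseteq\mathcal X$ of encoding items with total weight $w(\mathcal X^* )\le(3t-3i-2)\cdot B$ and total profit $p(\mathcal X^* )\ge(3t-3i-2)\cdot B+\left(\binom{t}{2}-\binom{i+1}{2}+\frac{i}{3}\right)\cdot 9nB$ if and only if the instance $\mathcal A_i$ has a solution, i.e., there exists $\mathcal A_i^*\subseteq\mathcal A_i$ with $|\mathcal A_i^*|=n$ and $\sum_{a\in\mathcal A_i^*}a=B_n$.
   Context: Let $n\ge1$, $B_n=\sum_{j=1}^{3n}(3n+1)^j$ and $\widetilde{\mathcal A}_n=\{(3n+1)^{j_1}+(3n+1)^{j_2}+(3n+1)^{j_3}: j_1,j_2,j_3\in\{1,\dots,3n\}\}$. Let $t$ be a power of two and, for each $i\in\{0,\dots,t-1\}$, let $\mathcal A_i=\{a^i_1,\dots,a^i_{3n}\}$ be a set of $3n$ integers from $\widetilde{\mathcal A}_n$ with $\sum_{j=1}^{3n}a^i_j=3B_n$. Let $X=3tnB_n$ and $B=B_n+nX$. For each $i\in\{0,\dots,t-1\}$ and $j\in\{1,\dots,3n\}$ there is an encoding item $x^i_j$ with weight $w(x^i_j)=X+a^i_j$ and profit $p(x^i_j)=X+a^i_j+3iB$; $\mathcal X$ is the set of all encoding items. For a set $\mathcal S$ of items, $w(\mathcal S)=\sum_{x\in\mathcal S}w(x)$ and $p(\mathcal S)=\sum_{x\in\mathcal S}p(x)$. *)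

theory Defs
  imports Complex_Main
begin

definition Bn :: "nat \<Rightarrow> int" where
  "Bn n = (\<Sum>j=1..3*n. (3 * int n + 1) ^ j)"

definition Atilde :: "nat \<Rightarrow> int set" where
  "Atilde n = {(3 * int n + 1) ^ j1 + (3 * int n + 1) ^ j2 + (3 * int n + 1) ^ j3
               | j1 j2 j3. j1 \<in> {1..3*n} \<and> j2 \<in> {1..3*n} \<and> j3 \<in> {1..3*n}}"

definition bigX :: "nat \<Rightarrow> nat \<Rightarrow> int" where
  "bigX n t = 3 * int t * int n * Bn n"

definition bigB :: "nat \<Rightarrow> nat \<Rightarrow> int" where
  "bigB n t = Bn n + int n * bigX n t"

text \<open>Encoding item x^i_j is represented by the index pair (i,j).\<close>
definition items :: "nat \<Rightarrow> nat \<Rightarrow> (nat \<times> nat) set" where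
  "items n t = {..<t} \<times> {1..3*n}"

definition wt :: "nat \<Rightarrow> nat \<Rightarrow> (nat \<Rightarrow> nat \<Rightarrow> int) \<Rightarrow> nat \<times> nat \<Rightarrow> int" where
  "wt n t a x = bigX n t + a (fst x) (snd x)"

definition pr :: "nat \<Rightarrow> nat \<Rightarrow> (nat \<Rightarrow> nat \<Rightarrow> int) \<Rightarrow> nat \<times> nat \<Rightarrow> int" where
  "pr n t a x = bigX n t + a (fst x) (snd x) + 3 * int (fst x) * bigB n t"

end

theory Submission
  imports Defs
begin

lemma Lconst:
  fixes C :: int
  shows "i < t \<Longrightarrow> (\<Sum>k<t. if i < k then C else 0) = C * (int t - int i - 1)"
proof (induction t)
  case 0 then show ?case by simp
next
  case (Suc t)
  show ?case
  proof (cases "i = t")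
    case True
    have "(\<Sum>k<Suc t. if i < k then C else 0) = 0"
      by (rule sum.neutral) (use True in auto)
    then show ?thesis using True by simp
  next
    case False
    then have "i < t" using Suc.prems by simp
    then show ?thesis using Suc.IH by (simp add: algebra_simps)
  qed
qed

lemma Ltri:
  shows "i < t \<Longrightarrow> (\<Sum>k<t. if i < k then int k else 0) = int (t choose 2) - int ((i+1) choose 2)"
proof (induction t)
  case 0 then show ?case by simp
next
  case (Suc t)
  have c2: "Suc t choose 2 = t + (t choose 2)" by (simp add: numeral_2_eq_2)
  show ?case
  proof (cases "i = t")
    case True
    have "(\<Sum>k<Suc t. if i < k then int k else 0) = 0"
      by (rule sum.neutral) (use True in auto)
    then show ?thesis using True by simp
  next
    case False
    then have "i < t" using Suc.prems by simp
    then show ?thesis using Suc.IH c2 by simp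
  qed
qed

lemma Lsum2:
  fixes g h :: "nat \<Rightarrow> int"
  assumes "i < t" "\<forall>k<t. k \<noteq> i \<longrightarrow> g k = h k"
  shows "sum g {..<t} = g i - h i + sum h {..<t}"
proof -
  have "sum g {..<t} = (\<Sum>k<t. h k + (if k = i then g i - h i else 0))"
    by (rule sum.cong) (use assms in auto)
  also have "\<dots> = sum h {..<t} + (g i - h i)"
    using assms(1) by (simp add: sum.distrib)
  finally show ?thesis by simp
qed

lemma Lsum3:
  fixes g h :: "nat \<Rightarrow> int"
  assumes "i < t" "\<forall>k<t. k \<noteq> i \<longrightarrow> g k = h k" "h i = 0"
  shows "sum g {..<t} = g i + sum h {..<t}"
  using Lsum2[OF assms(1,2)] assms(3) by simp

lemma key_sums:
  assumes "\<forall>k<t. F k \<subseteq> {1..3*n}"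
  shows "(\<Sum>x\<in>Sigma {..<t} F. wt n t a x) = (\<Sum>k<t. int (card (F k))) * bigX n t + (\<Sum>k<t. \<Sum>j\<in>F k. a k j)"
    and "(\<Sum>x\<in>Sigma {..<t} F. pr n t a x) = (\<Sum>x\<in>Sigma {..<t} F. wt n t a x) + 3 * bigB n t * (\<Sum>k<t. int k * int (card (F k)))"
proof -
  have fin: "\<forall>k\<in>{..<t}. finite (F k)" using assms finite_subset by blast
  have "(\<Sum>x\<in>Sigma {..<t} F. wt n t a x) = (\<Sum>k<t. \<Sum>j\<in>F k. wt n t a (k,j))"
    using sum.Sigma[of "{..<t}" F "\<lambda>k j. wt n t a (k,j)"] fin by simp
  also have "\<dots> = (\<Sum>k<t. int (card (F k)) * bigX n t + (\<Sum>j\<in>F k. a k j))"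
    by (simp add: wt_def sum.distrib)
  also have "\<dots> = (\<Sum>k<t. int (card (F k))) * bigX n t + (\<Sum>k<t. \<Sum>j\<in>F k. a k j)"
    by (simp add: sum.distrib sum_distrib_right)
  finally show "(\<Sum>x\<in>Sigma {..<t} F. wt n t a x) = (\<Sum>k<t. int (card (F k))) * bigX n t + (\<Sum>k<t. \<Sum>j\<in>F k. a k j)" .
  have "(\<Sum>x\<in>Sigma {..<t} F. pr n t a x) = (\<Sum>x\<in>Sigma {..<t} F. wt n t a x + 3 * bigB n t * int (fst x))"
    by (rule sum.cong) (auto simp: pr_def wt_def)
  also have "\<dots> = (\<Sum>x\<in>Sigma {..<t} F. wt n t a x) + 3 * bigB n t * (\<Sum>x\<in>Sigma {..<t} F. int (fst x))"
    by (simp add: sum.distrib sum_distrib_left)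
  also have "(\<Sum>x\<in>Sigma {..<t} F. int (fst x)) = (\<Sum>k<t. \<Sum>j\<in>F k. int k)"
    using sum.Sigma[of "{..<t}" F "\<lambda>k j. int k"] fin by (simp add: case_prod_beta)
  also have "\<dots> = (\<Sum>k<t. int k * int (card (F k)))" by (simp add: mult.commute)
  finally show "(\<Sum>x\<in>Sigma {..<t} F. pr n t a x) = (\<Sum>x\<in>Sigma {..<t} F. wt n t a x) + 3 * bigB n t * (\<Sum>k<t. int k * int (card (F k)))" .
qed

theorem lemma3:
  fixes n t i :: nat and a :: "nat \<Rightarrow> nat \<Rightarrow> int"
  assumes "n \<ge> 1"
    and "\<exists>k. t = 2 ^ k"
    and "\<forall>i'<t. inj_on (a i') {1..3*n}"
    and "\<forall>i'<t. a i' ` {1..3*n} \<subseteq> Atilde n"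
    and "\<forall>i'<t. (\<Sum>j=1..3*n. a i' j) = 3 * Bn n"
    and "i < t"
  shows "(\<exists>S \<subseteq> items n t.
            (\<Sum>x\<in>S. wt n t a x) \<le> (3 * int t - 3 * int i - 2) * bigB n t \<and>
            real_of_int (\<Sum>x\<in>S. pr n t a x) \<ge>
              real_of_int ((3 * int t - 3 * int i - 2) * bigB n t)
              + (real (t choose 2) - real ((i + 1) choose 2) + real i / 3) * 9 * real n * real_of_int (bigB n t))
         \<longleftrightarrow>
         (\<exists>As \<subseteq> a i ` {1..3*n}. card As = n \<and> \<Sum>As = Bn n)"
proof -
  have Bpos: "Bn n > 0" unfolding Bn_def
    by (rule sum_pos) (use assms(1) in auto)
  have apos: "a k j \<ge> 0" if "k < t" "j \<in> {1..3*n}" for k j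
  proof -
    have "a k j \<in> Atilde n" using assms(4) that by blast
    then show ?thesis unfolding Atilde_def by auto
  qed
  define X where "X = bigX n t"
  define B where "B = bigB n t"
  define K where "K = 3 * int t - 3 * int i - 2"
  define T where "T = int (t choose 2) - int ((i+1) choose 2)"
  define D where "D = 3 * int n * T + int n * int i"
  have Xd: "X = 3 * int t * int n * Bn n" unfolding X_def bigX_def by simp
  have Bd: "B = Bn n + int n * X" unfolding B_def bigB_def X_def by simp
  have K1: "K \<ge> 1" using assms(6) unfolding K_def by simp
  have X3: "X \<ge> 3 * int t * Bn n"
  proof -
    have "3 * int t * Bn n * 1 \<le> 3 * int t * Bn n * int n"
      using assms(1) Bpos by (intro mult_left_mono) auto
    then show ?thesis unfolding Xd by (simp add: ac_simps)
  qed
  have XK: "X > K * Bn n"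
  proof -
    have "K * Bn n < 3 * int t * Bn n" using Bpos unfolding K_def by simp
    then show ?thesis using X3 by simp
  qed
  have Xpos: "X > 0" using XK K1 Bpos by (smt (verit) mult_pos_pos)
  have Bp: "B > 0" unfolding Bd using Bpos Xpos by (simp add: add_pos_nonneg)
  have KB: "K * B = K * Bn n + K * int n * X" unfolding Bd by (simp add: algebra_simps)
  have realeq: "(real (t choose 2) - real ((i + 1) choose 2) + real i / 3) * 9 * real n * real_of_int B
      = real_of_int (3 * D * B)"
    unfolding D_def T_def by (simp add: field_simps)
  have Ttri: "(\<Sum>k<t. if i < k then int k else 0) = T" unfolding T_def using Ltri assms(6) by blast
  show ?thesis
  proof
    assume "\<exists>S \<subseteq> items n t.
            (\<Sum>x\<in>S. wt n t a x) \<le> (3 * int t - 3 * int i - 2) * bigB n t \<and>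
            real_of_int (\<Sum>x\<in>S. pr n t a x) \<ge>
              real_of_int ((3 * int t - 3 * int i - 2) * bigB n t)
              + (real (t choose 2) - real ((i + 1) choose 2) + real i / 3) * 9 * real n * real_of_int (bigB n t)"
    then obtain S where Ssub: "S \<subseteq> items n t"
      and w: "(\<Sum>x\<in>S. wt n t a x) \<le> K * B"
      and p0: "real_of_int (\<Sum>x\<in>S. pr n t a x) \<ge> real_of_int (K * B) + real_of_int (3 * D * B)"
      unfolding K_def B_def using realeq[unfolded B_def] by auto
    have p: "(\<Sum>x\<in>S. pr n t a x) \<ge> K * B + 3 * D * B" using p0 by linarith
    define F where "F k = {j. (k,j) \<in> S}" for k
    have Fsub: "\<forall>k<t. F k \<subseteq> {1..3*n}" using Ssub unfolding F_def items_def by auto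
    have SS: "S = Sigma {..<t} F" using Ssub unfolding F_def items_def by auto
    have finF: "finite (F k)" if "k < t" for k using Fsub that finite_subset by blast
    define c where "c k = int (card (F k))" for k
    define m where "m = (\<Sum>k<t. c k)"
    define A where "A = (\<Sum>k<t. \<Sum>j\<in>F k. a k j)"
    define I where "I = (\<Sum>k<t. int k * c k)"
    have cle: "c k \<le> 3 * int n" if "k < t" for k
    proof -
      have "card (F k) \<le> card {1..3*n}" using Fsub that by (intro card_mono) auto
      then show ?thesis unfolding c_def by simp
    qed
    have cge: "c k \<ge> 0" for k unfolding c_def by simp
    have wS: "(\<Sum>x\<in>S. wt n t a x) = m * X + A"
      unfolding SS key_sums(1)[OF Fsub] m_def A_def c_def X_def by simp
    have pS: "(\<Sum>x\<in>S. pr n t a x) = m * X + A + 3 * B * I"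
      unfolding SS key_sums(2)[OF Fsub] using wS[unfolded SS] unfolding I_def c_def B_def by simp
    have A0: "A \<ge> 0" unfolding A_def
      by (intro sum_nonneg) (use apos Fsub in blast)
    have A3: "A \<le> 3 * int t * Bn n"
    proof -
      have "A \<le> (\<Sum>k<t. \<Sum>j\<in>{1..3*n}. a k j)" unfolding A_def
      proof (rule sum_mono)
        fix k assume k: "k \<in> {..<t}"
        show "(\<Sum>j\<in>F k. a k j) \<le> (\<Sum>j\<in>{1..3*n}. a k j)"
          by (rule sum_mono2) (use k Fsub apos in auto)
      qed
      also have "\<dots> = (\<Sum>k<t. 3 * Bn n)" using assms(5) by simp
      finally show ?thesis by simp
    qed
    have mle: "m \<le> K * int n"
    proof (rule ccontr)
      assume "\<not> ?thesis"
      then have "m \<ge> K * int n + 1" by simp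
      then have "m * X \<ge> (K * int n + 1) * X" using Xpos by (intro mult_right_mono) auto
      then have "m * X + A > K * B" using A0 XK KB by (simp add: algebra_simps)
      then show False using w wS by simp
    qed
    have IgeD: "I \<ge> D"
    proof -
      have "3 * B * I \<ge> 3 * D * B" using w p wS pS by simp
      then have "B * (I - D) \<ge> 0" by (simp add: algebra_simps)
      then show ?thesis using Bp by (simp add: zero_le_mult_iff)
    qed
    define P where "P = (\<Sum>k<t. (int k - int i) * (c k - (if i < k then 3 * int n else 0)))"
    have sub: "(\<Sum>k<t. if i < k then int k - int i else 0) = T - int i * (int t - int i - 1)"
    proof -
      have "(\<Sum>k<t. if i < k then int k - int i else 0)
          = (\<Sum>k<t. (if i < k then int k else 0) - (if i < k then int i else 0))"
        by (rule sum.cong) auto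
      also have "\<dots> = T - int i * (int t - int i - 1)"
        by (simp add: sum_subtractf Ttri Lconst[OF assms(6)])
      finally show ?thesis .
    qed
    have Iexp: "I - int i * m = P + 3 * int n * (T - int i * (int t - int i - 1))"
    proof -
      have "I - int i * m = (\<Sum>k<t. (int k - int i) * c k)"
        unfolding I_def m_def by (simp add: sum_subtractf sum_distrib_left algebra_simps)
      also have "\<dots> = (\<Sum>k<t. (int k - int i) * (c k - (if i < k then 3 * int n else 0))
                 + 3 * int n * (if i < k then int k - int i else 0))"
        by (rule sum.cong) (auto simp: algebra_simps)
      also have "\<dots> = P + 3 * int n * (T - int i * (int t - int i - 1))"
        unfolding P_def by (simp add: sum.distrib sum_distrib_left[symmetric] sub)
      finally show ?thesis .
    qed
    have IDP: "I - D = P + int i * (m - K * int n)"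
      using Iexp unfolding D_def K_def by (simp add: algebra_simps)
    have terms: "(int k - int i) * (c k - (if i < k then 3 * int n else 0)) \<le> 0" if "k < t" for k
    proof (cases "i < k")
      case True then show ?thesis using cle[OF that] by (simp add: mult_nonneg_nonpos)
    next
      case False then show ?thesis using cge[of k] by (simp add: mult_nonpos_nonneg)
    qed
    have Ple: "P \<le> 0" unfolding P_def by (rule sum_nonpos) (use terms in auto)
    have im: "int i * (m - K * int n) \<le> 0" using mle by (simp add: mult_nonneg_nonpos)
    have P0: "P = 0" and ID: "I = D" using IDP IgeD Ple im by auto
    have wq: "m * X + A = K * B" using w p wS pS ID by (simp add: algebra_simps)
    have mK: "m = K * int n"
    proof (rule ccontr)
      assume "m \<noteq> K * int n"
      then have "m \<le> K * int n - 1" using mle by simp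
      then have "m * X \<le> (K * int n - 1) * X" using Xpos by (intro mult_right_mono) auto
      then have "A \<ge> K * Bn n + X" using wq KB by (simp add: algebra_simps)
      moreover have "K * Bn n > 0" using K1 Bpos by simp
      ultimately show False using A3 X3 by simp
    qed
    have AK: "A = K * Bn n" using wq mK KB by (simp add: algebra_simps)
    have allz: "\<forall>k\<in>{..<t}. (int k - int i) * (c k - (if i < k then 3 * int n else 0)) = 0"
    proof -
      have "(\<Sum>k<t. - ((int k - int i) * (c k - (if i < k then 3 * int n else 0)))) = 0"
        using P0 unfolding P_def by (simp add: sum_negf)
      then have "\<forall>k\<in>{..<t}. - ((int k - int i) * (c k - (if i < k then 3 * int n else 0))) = 0"
        by (subst (asm) sum_nonneg_eq_0_iff) (use terms in auto)
      then show ?thesis by simp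
    qed
    have cval: "c k = (if i < k then 3 * int n else 0)" if "k < t" "k \<noteq> i" for k
      using allz that by auto
    have Fval: "F k = (if i < k then {1..3*n} else {})" if "k < t" "k \<noteq> i" for k
    proof (cases "i < k")
      case True
      have "card (F k) = card {1..3*n}" using cval[OF that] True unfolding c_def by simp
      then show ?thesis using True Fsub that by (simp add: card_subset_eq)
    next
      case False
      then show ?thesis using cval[OF that] finF[OF that(1)] unfolding c_def by simp
    qed
    have ci: "c i = int n"
    proof -
      have "m = c i + (\<Sum>k<t. if i < k then 3 * int n else 0)"
        unfolding m_def by (rule Lsum3[OF assms(6)]) (simp_all add: cval)
      then have "m = c i + 3 * int n * (int t - int i - 1)" using Lconst[OF assms(6)] by simp
      then show ?thesis using mK unfolding K_def by (simp add: algebra_simps)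
    qed
    have ai: "(\<Sum>j\<in>F i. a i j) = Bn n"
    proof -
      have "A = (\<Sum>j\<in>F i. a i j) + (\<Sum>k<t. if i < k then 3 * Bn n else 0)"
        unfolding A_def
      proof (rule Lsum3[OF assms(6)])
        show "\<forall>k<t. k \<noteq> i \<longrightarrow> (\<Sum>j\<in>F k. a k j) = (if i < k then 3 * Bn n else 0)"
        proof (intro allI impI)
          fix k assume k: "k < t" "k \<noteq> i"
          show "(\<Sum>j\<in>F k. a k j) = (if i < k then 3 * Bn n else 0)"
            using Fval[OF k] assms(5) k(1) by simp
        qed
      qed simp
      then have "A = (\<Sum>j\<in>F i. a i j) + 3 * Bn n * (int t - int i - 1)" using Lconst[OF assms(6)] by simp
      then show ?thesis using AK unfolding K_def by (simp add: algebra_simps)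
    qed
    have inji: "inj_on (a i) (F i)" using assms(3,6) Fsub by (meson inj_on_subset)
    show "\<exists>As \<subseteq> a i ` {1..3*n}. card As = n \<and> \<Sum>As = Bn n"
    proof (intro exI conjI)
      show "a i ` F i \<subseteq> a i ` {1..3*n}" using Fsub assms(6) by auto
      show "card (a i ` F i) = n" using ci inji unfolding c_def by (simp add: card_image)
      show "\<Sum>(a i ` F i) = Bn n" using ai inji by (simp add: sum.reindex)
    qed
  next
    assume "\<exists>As \<subseteq> a i ` {1..3*n}. card As = n \<and> \<Sum>As = Bn n"
    then obtain As where As: "As \<subseteq> a i ` {1..3*n}" "card As = n" "\<Sum>As = Bn n" by blast
    define J where "J = {j\<in>{1..3*n}. a i j \<in> As}"
    have imJ: "a i ` J = As" using As(1) unfolding J_def by auto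
    have injJ: "inj_on (a i) J"
      by (rule inj_on_subset[OF assms(3)[rule_format, OF assms(6)]]) (auto simp: J_def)
    have cJ: "card J = n" using As(2) imJ card_image[OF injJ] by simp
    have sJ: "(\<Sum>j\<in>J. a i j) = Bn n" using As(3) imJ injJ sum.reindex[OF injJ, of id] by simp
    define F where "F k = (if k = i then J else if i < k then {1..3*n} else {})" for k
    have Fsub: "\<forall>k<t. F k \<subseteq> {1..3*n}" unfolding F_def J_def by auto
    define S where "S = Sigma {..<t} F"
    have m: "(\<Sum>k<t. int (card (F k))) = int n + 3 * int n * (int t - int i - 1)"
    proof -
      have "(\<Sum>k<t. int (card (F k))) = int (card (F i)) + (\<Sum>k<t. if i < k then 3 * int n else 0)"
        by (rule Lsum3[OF assms(6)]) (simp_all add: F_def)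
      then show ?thesis using Lconst[OF assms(6)] cJ by (simp add: F_def)
    qed
    have A: "(\<Sum>k<t. \<Sum>j\<in>F k. a k j) = Bn n + 3 * Bn n * (int t - int i - 1)"
    proof -
      have "(\<Sum>k<t. \<Sum>j\<in>F k. a k j) = (\<Sum>j\<in>F i. a i j) + (\<Sum>k<t. if i < k then 3 * Bn n else 0)"
        proof (rule Lsum3[OF assms(6)])
          show "\<forall>k<t. k \<noteq> i \<longrightarrow> (\<Sum>j\<in>F k. a k j) = (if i < k then 3 * Bn n else 0)"
          proof (intro allI impI)
            fix k assume k: "k < t" "k \<noteq> i"
            show "(\<Sum>j\<in>F k. a k j) = (if i < k then 3 * Bn n else 0)"
              using assms(5) k unfolding F_def by simp
          qed
        qed simp
      then show ?thesis using Lconst[OF assms(6)] sJ by (simp add: F_def)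
    qed
    have I: "(\<Sum>k<t. int k * int (card (F k))) = D"
    proof -
      have "(\<Sum>k<t. int k * int (card (F k))) = int i * int (card (F i)) 
          + (\<Sum>k<t. 3 * int n * (if i < k then int k else 0))"
        by (rule Lsum3[OF assms(6)]) (simp_all add: F_def)
      then show ?thesis using Ttri cJ unfolding D_def by (simp add: F_def sum_distrib_left[symmetric])
    qed
    have wS: "(\<Sum>x\<in>S. wt n t a x) = K * B"
      unfolding S_def key_sums(1)[OF Fsub] m A X_def[symmetric] KB unfolding K_def
      by (simp add: algebra_simps)
    have pS: "(\<Sum>x\<in>S. pr n t a x) = K * B + 3 * D * B"
      unfolding S_def key_sums(2)[OF Fsub] wS[unfolded S_def] I B_def[symmetric] by (simp add: algebra_simps)
    show "\<exists>S \<subseteq> items n t.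
            (\<Sum>x\<in>S. wt n t a x) \<le> (3 * int t - 3 * int i - 2) * bigB n t \<and>
            real_of_int (\<Sum>x\<in>S. pr n t a x) \<ge>
              real_of_int ((3 * int t - 3 * int i - 2) * bigB n t)
              + (real (t choose 2) - real ((i + 1) choose 2) + real i / 3) * 9 * real n * real_of_int (bigB n t)"
    proof (intro exI conjI)
      show "S \<subseteq> items n t" unfolding S_def items_def using Fsub by auto
      show "(\<Sum>x\<in>S. wt n t a x) \<le> (3 * int t - 3 * int i - 2) * bigB n t"
        using wS unfolding K_def B_def by simp
      show "real_of_int (\<Sum>x\<in>S. pr n t a x) \<ge>
              real_of_int ((3 * int t - 3 * int i - 2) * bigB n t)
              + (real (t choose 2) - real ((i + 1) choose 2) + real i / 3) * 9 * real n * real_of_int (bigB n t)"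
        unfolding K_def[symmetric] B_def[symmetric] realeq using pS by simp
    qed
  qed
qed

end
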